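(* There exist a finite alphabet $\Sigma$ and a set $L\subseteq\mathcal{T}_\Sigma$ of infinite $\Sigma$-labeled binary trees recognized by a deterministic automaton such that $\mu(L)$ is an irrational number.
   Context: The full binary tree is $V=\{L,R\}^*$ (root $\epsilon$). A $\Sigma$-tree is a map $t:V\to\Sigma$, and $\mathcal{T}_\Sigma=\Sigma^V$. The coin-flipping measure $\mu$ on $\mathcal{T}_\Sigma$ is the product probability measure with $\mu(\{t : t(v_1)=a_1,\dots,t(v_k)=a_k\})=|\Sigma|^{-k}$ for pairwise distinct $v_i$. An alternating parity tree automaton is $\mathcal{A}=\langle\Sigma,Q,q_0,\delta,\pi\rangle$ with finite $Q$, $q_0\in Q$, $\pi:Q\to\omega$ and $\delta(q,a)$ a positive Boolean combination (using $\wedge,\vee$) of elements of $\{L,R\}\times Q$. A tree $t$ is accepted if player $\exists$ wins the game starting at $\langle\epsilon,q_0\rangle$ in which: from $\langle x,q\rangle$ the game moves to $\langle x,\delta(q,t(x))\rangle$; at a disjunction $\exists$ chooses a disjunct, at a conjunction $\forall$ chooses a conjunct; $\langle x,(D,q)\rangle$ moves to $\langle xD,q\rangle$ for $D\in\{L,R\}$; an infinite play is won by $\exists$ iff the largest priority $\pi(q)$ among states $q$ visited infinitely often (in positions $\langle x,q\rangle$) is even. A deterministic automaton is one in which every $\delta(q,a)$ has the form $(L,q_L)\wedge(R,q_R)$. *)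

theory Defs
  imports "HOL-Probability.Probability"
begin

datatype dir = L | R

text \<open>Vertices of the full binary tree are words over {L,R}; trees over labels 'a are
  maps dir list => 'a (labels restricted to the alphabet A where relevant).\<close>

definition coin_measure :: "'a set \<Rightarrow> (dir list \<Rightarrow> 'a) measure" where
  "coin_measure A = (\<Pi>\<^sub>M v\<in>(UNIV :: dir list set). uniform_count_measure A)"

definition dsel :: "dir \<Rightarrow> 'q \<times> 'q \<Rightarrow> 'q" where
  "dsel D p = (case D of L \<Rightarrow> fst p | R \<Rightarrow> snd p)"

text \<open>The unique run of a deterministic automaton: delta q a = (q_L, q_R) encodes
  the transition (L,q_L) /\ (R,q_R). drun delta q t x is the state at vertex x
  when starting in state q at the root.\<close>
fun drun :: "('q \<Rightarrow> 'a \<Rightarrow> 'q \<times> 'q) \<Rightarrow> 'q \<Rightarrow> (dir list \<Rightarrow> 'a) \<Rightarrow> dir list \<Rightarrow> 'q" where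
  "drun delta q t [] = q"
| "drun delta q t (D # x) = drun delta (dsel D (delta q (t []))) (\<lambda>y. t (D # y)) x"

definition branch_vertex :: "(nat \<Rightarrow> dir) \<Rightarrow> nat \<Rightarrow> dir list" where
  "branch_vertex \<beta> n = map \<beta> [0..<n]"

definition parity_ok :: "('q \<Rightarrow> nat) \<Rightarrow> (nat \<Rightarrow> 'q) \<Rightarrow> bool" where
  "parity_ok \<pi> f = even (Max (\<pi> ` {q. \<exists>\<^sub>\<infinity>n. f n = q}))"

text \<open>Language of a deterministic parity tree automaton over alphabet A:
  player forall chooses the direction at each step, so a tree is accepted iff every
  branch of the unique run satisfies the parity condition.\<close>
definition det_lang ::
  "'a set \<Rightarrow> 'q \<Rightarrow> ('q \<Rightarrow> 'a \<Rightarrow> 'q \<times> 'q) \<Rightarrow> ('q \<Rightarrow> nat) \<Rightarrow> (dir list \<Rightarrow> 'a) set" where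
  "det_lang A q0 delta \<pi> =
     {t. (\<forall>x. t x \<in> A) \<and>
         (\<forall>\<beta>. parity_ok \<pi> (\<lambda>n. drun delta q0 t (branch_vertex \<beta> n)))}"

definition det_automaton :: "'a set \<Rightarrow> 'q set \<Rightarrow> 'q \<Rightarrow> ('q \<Rightarrow> 'a \<Rightarrow> 'q \<times> 'q) \<Rightarrow> bool" where
  "det_automaton A Q q0 delta \<longleftrightarrow> finite Q \<and> q0 \<in> Q \<and>
     (\<forall>q\<in>Q. \<forall>a\<in>A. fst (delta q a) \<in> Q \<and> snd (delta q a) \<in> Q)"

end

theory Submission
  imports Defs "HOL-Computational_Algebra.Primes"
begin

definition A3 :: "nat set" where "A3 = {0,1,2}"

lemma A3_iff: "x \<in> A3 \<longleftrightarrow> x = 0 \<or> x = 1 \<or> x = 2" by (auto simp: A3_def)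
lemma A3_fin: "finite A3" by (simp add: A3_def)
lemma A3_card: "card A3 = 3" by (simp add: A3_def)
abbreviation "U \<equiv> uniform_count_measure A3"
abbreviation "S \<equiv> coin_measure A3"

lemma U_prob: "prob_space U" by (rule prob_space_uniform_count_measure) (auto simp: A3_def)

interpretation UP: product_prob_space "\<lambda>_::dir list. U" "UNIV :: dir list set"
  unfolding product_prob_space_def product_prob_space_axioms_def product_sigma_finite_def
  using U_prob prob_space_imp_sigma_finite by blast

lemma S_def': "S = PiM UNIV (\<lambda>_. U)" by (simp add: coin_measure_def)

lemma S_prob: "prob_space S" unfolding S_def' by (rule UP.P.prob_space_axioms)

lemma space_S': "space (PiM UNIV (\<lambda>_::dir list. U)) = {t. \<forall>v. t v \<in> A3}"
  by (auto simp: space_PiM PiE_UNIV_domain space_uniform_count_measure Pi_def)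

lemma space_S: "space S = {t. \<forall>v. t v \<in> A3}"
  unfolding coin_measure_def by (auto simp: space_PiM PiE_UNIV_domain space_uniform_count_measure Pi_def)

fun tcons :: "nat \<Rightarrow> (dir list \<Rightarrow> nat) \<Rightarrow> (dir list \<Rightarrow> nat) \<Rightarrow> dir list \<Rightarrow> nat" where
  "tcons a l r [] = a" | "tcons a l r (L#v) = l v" | "tcons a l r (R#v) = r v"

definition shift :: "dir \<Rightarrow> (dir list \<Rightarrow> nat) \<Rightarrow> dir list \<Rightarrow> nat" where
  "shift D t = (\<lambda>v. t (D#v))"

lemma tcons_in: "a \<in> X \<Longrightarrow> (\<forall>w. l w \<in> X) \<Longrightarrow> (\<forall>w. r w \<in> X) \<Longrightarrow> tcons a l r v \<in> X"
  by (cases "(a,l,r,v)" rule: tcons.cases) auto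

lemma meas_tcons: "(\<lambda>(a,l,r). tcons a l r) \<in> measurable (U \<Otimes>\<^sub>M (S \<Otimes>\<^sub>M S)) S"
proof -
  have "(\<lambda>(x::nat \<times> (dir list \<Rightarrow> nat) \<times> (dir list \<Rightarrow> nat)) v. tcons (fst x) (fst (snd x)) (snd (snd x)) v) \<in> measurable (U \<Otimes>\<^sub>M (S \<Otimes>\<^sub>M S)) S"
    unfolding S_def'
  proof (rule measurable_PiM_single')
    fix v :: "dir list"
    show "(\<lambda>x. tcons (fst x) (fst (snd x)) (snd (snd x)) v) \<in> measurable (U \<Otimes>\<^sub>M (Pi\<^sub>M UNIV (\<lambda>_. U) \<Otimes>\<^sub>M Pi\<^sub>M UNIV (\<lambda>_. U))) U"
    proof (cases v)
      case Nil then show ?thesis by simp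
    next
      case (Cons D w) then show ?thesis by (cases D) simp_all
    qed
  next
    show "(\<lambda>x v. tcons (fst x) (fst (snd x)) (snd (snd x)) v) \<in> space (U \<Otimes>\<^sub>M (Pi\<^sub>M UNIV (\<lambda>_. U) \<Otimes>\<^sub>M Pi\<^sub>M UNIV (\<lambda>_. U))) \<rightarrow> (\<Pi>\<^sub>E i\<in>UNIV. space U)"
    proof
      fix x :: "nat \<times> (dir list \<Rightarrow> nat) \<times> (dir list \<Rightarrow> nat)" assume x: "x \<in> space (U \<Otimes>\<^sub>M (Pi\<^sub>M UNIV (\<lambda>_. U) \<Otimes>\<^sub>M Pi\<^sub>M UNIV (\<lambda>_. U)))"
      show "(\<lambda>v. tcons (fst x) (fst (snd x)) (snd (snd x)) v) \<in> (\<Pi>\<^sub>E i\<in>UNIV. space U)"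
        unfolding PiE_UNIV_domain
      proof
        fix v :: "dir list"
        show "tcons (fst x) (fst (snd x)) (snd (snd x)) v \<in> space U"
          using x by (intro tcons_in) (auto simp: space_pair_measure space_PiM)
      qed
    qed
  qed
  then show ?thesis by (simp add: case_prod_beta')
qed

lemma all_dirlist: "(\<forall>j\<in>J. P j) \<longleftrightarrow> (([] \<in> J \<longrightarrow> P []) \<and> (\<forall>w. L#w \<in> J \<longrightarrow> P (L#w)) \<and> (\<forall>w. R#w \<in> J \<longrightarrow> P (R#w)))"
proof
  assume "\<forall>j\<in>J. P j" then show "([] \<in> J \<longrightarrow> P []) \<and> (\<forall>w. L#w \<in> J \<longrightarrow> P (L#w)) \<and> (\<forall>w. R#w \<in> J \<longrightarrow> P (R#w))" by blast
next
  assume H: "([] \<in> J \<longrightarrow> P []) \<and> (\<forall>w. L#w \<in> J \<longrightarrow> P (L#w)) \<and> (\<forall>w. R#w \<in> J \<longrightarrow> P (R#w))"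
  show "\<forall>j\<in>J. P j"
  proof
    fix j assume j: "j \<in> J"
    show "P j"
    proof (cases j)
      case Nil then show ?thesis using H j by simp
    next
      case (Cons D w) then show ?thesis using H j by (cases D) simp_all
    qed
  qed
qed

lemma prod_split:
  assumes "finite J"
  shows "(\<Prod>j\<in>J. f j) = (if [] \<in> J then f [] else 1) * (\<Prod>w\<in>Cons L -` J. f (L#w)) * (\<Prod>w\<in>Cons R -` J. f (R#w))"
proof -
  have J: "J = (J \<inter> {[]}) \<union> (Cons L ` (Cons L -` J) \<union> Cons R ` (Cons R -` J))"
    using all_dirlist[of J "\<lambda>j. j \<in> (J \<inter> {[]}) \<union> (Cons L ` (Cons L -` J) \<union> Cons R ` (Cons R -` J))"] by auto
  have f1: "finite (Cons L -` J)" "finite (Cons R -` J)" using assms by (auto intro: finite_vimageI)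
  have "(\<Prod>j\<in>J. f j) = (\<Prod>j\<in>(J \<inter> {[]}) \<union> (Cons L ` (Cons L -` J) \<union> Cons R ` (Cons R -` J)). f j)"
    using J by simp
  also have "\<dots> = (\<Prod>j\<in>J \<inter> {[]}. f j) * ((\<Prod>j\<in>Cons L ` (Cons L -` J). f j) * (\<Prod>j\<in>Cons R ` (Cons R -` J). f j))"
    using f1 assms by (subst prod.union_disjoint; auto simp: prod.union_disjoint)+
  also have "(\<Prod>j\<in>Cons L ` (Cons L -` J). f j) = (\<Prod>w\<in>Cons L -` J. f (L#w))"
    by (subst prod.reindex) auto
  also have "(\<Prod>j\<in>Cons R ` (Cons R -` J). f j) = (\<Prod>w\<in>Cons R -` J. f (R#w))"
    by (subst prod.reindex) auto
  also have "(\<Prod>j\<in>J \<inter> {[]}. f j) = (if [] \<in> J then f [] else 1)"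
    by (cases "[] \<in> J") (auto simp: Int_absorb1 Int_absorb2)
  finally show ?thesis by (simp add: mult.assoc)
qed

lemma SS_prob: "prob_space (S \<Otimes>\<^sub>M S)"
proof -
  interpret a: prob_space S by (rule S_prob)
  interpret pair_prob_space S S by unfold_locales
  show ?thesis by (rule P.prob_space_axioms)
qed

lemma tcons_val: "tcons a l r i = a \<or> tcons a l r i = l (tl i) \<or> tcons a l r i = r (tl i)"
  by (cases "(a,l,r,i)" rule: tcons.cases) auto

lemma tcons_distr: "distr (U \<Otimes>\<^sub>M (S \<Otimes>\<^sub>M S)) S (\<lambda>(a,l,r). tcons a l r) = S"
  unfolding S_def'
proof (rule UP.PiM_eq)
  show "sets (distr (U \<Otimes>\<^sub>M (Pi\<^sub>M UNIV (\<lambda>_. U) \<Otimes>\<^sub>M Pi\<^sub>M UNIV (\<lambda>_. U))) (Pi\<^sub>M UNIV (\<lambda>_. U))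
          (\<lambda>(a, l, r). tcons a l r)) = sets (Pi\<^sub>M UNIV (\<lambda>_. U))" by simp
next
  fix J :: "dir list set" and F assume J: "finite J" "J \<subseteq> UNIV" and F: "\<And>j. j \<in> J \<Longrightarrow> F j \<in> sets U"
  let ?S = "Pi\<^sub>M UNIV (\<lambda>_::dir list. U)"
  let ?X = "prod_emb UNIV (\<lambda>_. U) J (\<Pi>\<^sub>E j\<in>J. F j)"
  let ?JL = "Cons L -` J" and ?JR = "Cons R -` J"
  let ?E = "if [] \<in> J then F [] else A3"
  let ?FL = "prod_emb UNIV (\<lambda>_. U) ?JL (\<Pi>\<^sub>E j\<in>?JL. F (L#j))"
  let ?FR = "prod_emb UNIV (\<lambda>_. U) ?JR (\<Pi>\<^sub>E j\<in>?JR. F (R#j))"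
  have Fsub: "\<And>j. j \<in> J \<Longrightarrow> F j \<subseteq> A3" using F by (auto simp: sets_uniform_count_measure)
  have fin: "finite ?JL" "finite ?JR" using J by (auto intro: finite_vimageI)
  have memX: "tcons a l r \<in> ?X \<longleftrightarrow> a \<in> A3 \<and> (\<forall>v. l v \<in> A3) \<and> (\<forall>v. r v \<in> A3) \<and>
     ([] \<in> J \<longrightarrow> a \<in> F []) \<and> (\<forall>w\<in>?JL. l w \<in> F (L#w)) \<and> (\<forall>w\<in>?JR. r w \<in> F (R#w))" for a l r
  proof -
    have "tcons a l r \<in> ?X \<longleftrightarrow> (\<forall>v. tcons a l r v \<in> A3) \<and> (\<forall>j\<in>J. tcons a l r j \<in> F j)"
      by (auto simp: prod_emb_def space_S'[unfolded S_def'] PiE_iff space_uniform_count_measure)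
    also have "(\<forall>v. tcons a l r v \<in> A3) \<longleftrightarrow> a \<in> A3 \<and> (\<forall>v. l v \<in> A3) \<and> (\<forall>v. r v \<in> A3)"
      using all_dirlist[of UNIV "\<lambda>v. tcons a l r v \<in> A3"] by simp
    also have "(\<forall>j\<in>J. tcons a l r j \<in> F j) \<longleftrightarrow> ([] \<in> J \<longrightarrow> a \<in> F []) \<and> (\<forall>w\<in>?JL. l w \<in> F (L#w)) \<and> (\<forall>w\<in>?JR. r w \<in> F (R#w))"
      using all_dirlist[of J "\<lambda>j. tcons a l r j \<in> F j"] by auto
    finally show ?thesis by blast
  qed
  have memF: "l \<in> prod_emb UNIV (\<lambda>_. U) K (\<Pi>\<^sub>E j\<in>K. G j) \<longleftrightarrow> (\<forall>v. l v \<in> A3) \<and> (\<forall>w\<in>K. l w \<in> G w)" for l K G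
    by (auto simp: prod_emb_def space_S'[unfolded S_def'] PiE_iff space_uniform_count_measure)
  have pre: "(\<lambda>(a,l,r). tcons a l r) -` ?X \<inter> space (U \<Otimes>\<^sub>M (?S \<Otimes>\<^sub>M ?S)) = ?E \<times> (?FL \<times> ?FR)"
  proof (rule set_eqI)
    fix x :: "nat \<times> (dir list \<Rightarrow> nat) \<times> (dir list \<Rightarrow> nat)"
    obtain a l r where x: "x = (a,l,r)" by (cases x) auto
    show "x \<in> (\<lambda>(a,l,r). tcons a l r) -` ?X \<inter> space (U \<Otimes>\<^sub>M (?S \<Otimes>\<^sub>M ?S)) \<longleftrightarrow> x \<in> ?E \<times> (?FL \<times> ?FR)"
      unfolding x vimage_def Int_iff mem_Collect_eq split space_pair_measure mem_Times_iff fst_conv snd_conv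
      unfolding memX
      unfolding memF space_S'[unfolded S_def'] space_uniform_count_measure
      using Fsub[of "[]"] by auto
  qed
  have Esets: "?E \<in> sets U" using F by (auto simp: sets_uniform_count_measure)
  have FLsets: "?FL \<in> sets ?S" using F fin by (intro sets_PiM_I) auto
  have FRsets: "?FR \<in> sets ?S" using F fin by (intro sets_PiM_I) auto
  have Xsets: "?X \<in> sets ?S" using F J by (intro sets_PiM_I) auto
  have e1: "emeasure (distr (U \<Otimes>\<^sub>M (?S \<Otimes>\<^sub>M ?S)) ?S (\<lambda>(a,l,r). tcons a l r)) ?X
      = emeasure (U \<Otimes>\<^sub>M (?S \<Otimes>\<^sub>M ?S)) (?E \<times> (?FL \<times> ?FR))"
    by (simp only: emeasure_distr[OF meas_tcons[unfolded S_def'] Xsets] pre)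
  have e2: "emeasure (U \<Otimes>\<^sub>M (?S \<Otimes>\<^sub>M ?S)) (?E \<times> (?FL \<times> ?FR)) = emeasure U ?E * (emeasure ?S ?FL * emeasure ?S ?FR)"
    by (simp only: sigma_finite_measure.emeasure_pair_measure_Times[OF prob_space_imp_sigma_finite[OF SS_prob[unfolded S_def']] Esets pair_measureI[OF FLsets FRsets]]
          sigma_finite_measure.emeasure_pair_measure_Times[OF prob_space_imp_sigma_finite[OF S_prob[unfolded S_def']] FLsets FRsets])
  have e3: "emeasure ?S ?FL = (\<Prod>j\<in>?JL. emeasure U (F (L#j)))"
    using F fin by (intro emeasure_PiM_emb U_prob) auto
  have e4: "emeasure ?S ?FR = (\<Prod>j\<in>?JR. emeasure U (F (R#j)))"
    using F fin by (intro emeasure_PiM_emb U_prob) auto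
  have e5: "emeasure U ?E = (if [] \<in> J then emeasure U (F []) else 1)"
    using prob_space.emeasure_space_1[OF U_prob] by (simp add: space_uniform_count_measure)
  have e6: "(\<Prod>j\<in>J. emeasure U (F j)) = (if [] \<in> J then emeasure U (F []) else 1) * ((\<Prod>j\<in>?JL. emeasure U (F (L#j))) * (\<Prod>j\<in>?JR. emeasure U (F (R#j))))"
    using prod_split[OF J(1), of "\<lambda>j. emeasure U (F j)"] by (simp only: mult.assoc)
  show "emeasure (distr (U \<Otimes>\<^sub>M (?S \<Otimes>\<^sub>M ?S)) ?S (\<lambda>(a,l,r). tcons a l r)) ?X = (\<Prod>j\<in>J. emeasure U (F j))"
  proof -
    have a: "emeasure (distr (U \<Otimes>\<^sub>M (?S \<Otimes>\<^sub>M ?S)) ?S (\<lambda>(a,l,r). tcons a l r)) ?X = emeasure U ?E * (emeasure ?S ?FL * emeasure ?S ?FR)"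
      using e1 e2 by (rule trans)
    have b: "emeasure U ?E * (emeasure ?S ?FL * emeasure ?S ?FR) = (if [] \<in> J then emeasure U (F []) else 1) * ((\<Prod>j\<in>?JL. emeasure U (F (L#j))) * (\<Prod>j\<in>?JR. emeasure U (F (R#j))))"
      by (rule arg_cong2[where f="(*)", OF e5 arg_cong2[where f="(*)", OF e3 e4]])
    show ?thesis using trans[OF a trans[OF b e6[symmetric]]] .
  qed
qed

definition delta :: "nat \<Rightarrow> nat \<Rightarrow> nat \<times> nat" where
  "delta q a = (if q = 0 then (if a = 0 then (1,1) else if a = 1 then (2,2) else (0,0)) else (q,q))"

definition pri :: "nat \<Rightarrow> nat" where "pri q = (if q = 1 then 0 else 1)"

abbreviation "Lang \<equiv> det_lang A3 0 delta pri"

lemma drun_sink: "q \<noteq> 0 \<Longrightarrow> drun delta q t x = q"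
  by (induction x arbitrary: t) (auto simp: delta_def dsel_def split: dir.splits)

lemma drun_Cons: "drun delta q t (D#x) = drun delta (dsel D (delta q (t []))) (shift D t) x"
  by (simp add: shift_def)

lemma branch_Suc: "branch_vertex \<beta> (Suc n) = \<beta> 0 # branch_vertex (\<lambda>i. \<beta> (Suc i)) n"
  by (simp add: branch_vertex_def upt_conv_Cons map_Suc_upt[symmetric] del: upt_Suc)

lemma INFM_Suc_iff: "(INFM n. P (Suc n)) \<longleftrightarrow> (INFM n::nat. P n)"
  apply (simp add: INFM_nat)
  apply (metis Suc_lessD Suc_less_SucD less_Suc_eq_0_disj not_less0 Suc_mono)
  done

lemma parity_Suc: "parity_ok p (\<lambda>n. f (Suc n)) \<longleftrightarrow> parity_ok p f"
  unfolding parity_ok_def by (simp add: INFM_Suc_iff[of "\<lambda>n. f n = _"])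

lemma parity_const: "parity_ok p (\<lambda>n. c) \<longleftrightarrow> even (p c)"
proof -
  have "{q. INFM n::nat. c = q} = {c}" by auto
  then show ?thesis unfolding parity_ok_def by simp
qed

lemma parity_0: "parity_ok pri f \<longleftrightarrow> parity_ok pri (\<lambda>n. if n = 0 then 0 else f n)"
  using parity_Suc[of pri f] parity_Suc[of pri "\<lambda>n. if n = 0 then 0 else f n"] by simp

lemma run_Suc: "drun delta 0 t (branch_vertex \<beta> (Suc n)) =
   drun delta (dsel (\<beta> 0) (delta 0 (t []))) (shift (\<beta> 0) t) (branch_vertex (\<lambda>i. \<beta> (Suc i)) n)"
  by (simp only: branch_Suc drun_Cons)

lemma Lang_rec: "t \<in> Lang \<longleftrightarrow> (\<forall>x. t x \<in> A3) \<and> (t [] = 0 \<or> (t [] = 2 \<and> shift L t \<in> Lang \<and> shift R t \<in> Lang))"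
proof (cases "\<forall>x. t x \<in> A3")
  case False
  then have "t \<notin> Lang" by (simp add: det_lang_def)
  with False show ?thesis by blast
next
  case True
  let ?g = "\<lambda>t \<beta>. parity_ok pri (\<lambda>n. drun delta 0 t (branch_vertex \<beta> n))"
  have G: "t \<in> Lang \<longleftrightarrow> (\<forall>\<beta>. ?g t \<beta>)" if "\<forall>x. t x \<in> A3" for t
    using that by (simp add: det_lang_def)
  have sh: "\<forall>x. shift D t x \<in> A3" for D using True by (simp add: shift_def)
  have gS: "?g t \<beta> \<longleftrightarrow> parity_ok pri (\<lambda>n. drun delta (dsel (\<beta> 0) (delta 0 (t []))) (shift (\<beta> 0) t) (branch_vertex (\<lambda>i. \<beta> (Suc i)) n))" for \<beta>
    using parity_Suc[of pri "\<lambda>n. drun delta 0 t (branch_vertex \<beta> n)"] by (simp add: run_Suc)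
  have t0: "t [] \<in> A3" using True by blast
  consider "t [] = 0" | "t [] = 1" | "t [] = 2" using t0 by (auto simp: A3_iff)
  then show ?thesis
  proof cases
    case 1
    then have "?g t \<beta>" for \<beta>
      by (simp add: gS delta_def dsel_def drun_sink parity_const pri_def split: dir.splits)
    then show ?thesis using G[OF True] 1 True by blast
  next
    case 2
    then have "\<not> ?g t \<beta>" for \<beta>
      by (simp add: gS delta_def dsel_def drun_sink parity_const pri_def split: dir.splits)
    then show ?thesis using G[OF True] 2 by auto
  next
    case 3
    then have g3: "?g t \<beta> \<longleftrightarrow> ?g (shift (\<beta> 0) t) (\<lambda>i. \<beta> (Suc i))" for \<beta>
      by (simp add: gS delta_def dsel_def split: dir.splits)
    have "(\<forall>\<beta>. ?g t \<beta>) \<longleftrightarrow> (\<forall>D \<beta>. ?g (shift D t) \<beta>)"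
    proof
      assume H: "\<forall>\<beta>. ?g t \<beta>"
      show "\<forall>D \<beta>. ?g (shift D t) \<beta>"
      proof (intro allI)
        fix D \<beta>
        show "?g (shift D t) \<beta>" using H[rule_format, of "case_nat D \<beta>"] g3[of "case_nat D \<beta>"] by simp
      qed
    next
      assume "\<forall>D \<beta>. ?g (shift D t) \<beta>"
      then show "\<forall>\<beta>. ?g t \<beta>" using g3 by blast
    qed
    also have "\<dots> \<longleftrightarrow> shift L t \<in> Lang \<and> shift R t \<in> Lang"
    proof -
      have D2: "(\<forall>D. P D) \<longleftrightarrow> P L \<and> P R" for P :: "dir \<Rightarrow> bool" by (metis dir.exhaust)
      show ?thesis using D2[of "\<lambda>D. \<forall>\<beta>. ?g (shift D t) \<beta>"] G[OF sh[of L]] G[OF sh[of R]] by simp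
    qed
    finally have "(\<forall>\<beta>. ?g t \<beta>) \<longleftrightarrow> shift L t \<in> Lang \<and> shift R t \<in> Lang" .
    then show ?thesis unfolding G[OF True] using 3 True by auto
  qed
qed

lemma meas_shift: "shift D \<in> measurable S S"
  unfolding S_def' shift_def
  by (rule measurable_PiM_single') (auto simp: space_PiM PiE_UNIV_domain Pi_iff intro: measurable_component_singleton)

lemma root_sets: "{t \<in> space S. t [] = a} \<in> sets S"
proof -
  have m: "(\<lambda>t. t []) \<in> measurable S U" unfolding S_def' by (rule measurable_component_singleton) simp
  have "(\<lambda>t. t []) -` ({a} \<inter> A3) \<inter> space S \<in> sets S"
    by (rule measurable_sets[OF m]) (simp add: sets_uniform_count_measure)
  also have "(\<lambda>t. t []) -` ({a} \<inter> A3) \<inter> space S = {t \<in> space S. t [] = a}"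
    by (auto simp: space_S)
  finally show ?thesis .
qed

lemma shift_A3: "\<forall>x. t x \<in> A3 \<Longrightarrow> \<forall>x. shift D t x \<in> A3" by (simp add: shift_def)

fun K :: "nat \<Rightarrow> (dir list \<Rightarrow> nat) set" where
  "K 0 = {}"
| "K (Suc n) = {t. (\<forall>x. t x \<in> A3) \<and> (t [] = 0 \<or> (t [] = 2 \<and> shift L t \<in> K n \<and> shift R t \<in> K n))}"

lemma K_sets: "K n \<in> sets S"
proof (induction n)
  case 0 then show ?case by simp
next
  case (Suc n)
  have eq: "K (Suc n) = {t \<in> space S. t [] = 0} \<union> ({t \<in> space S. t [] = 2} \<inter> (shift L -` K n \<inter> space S) \<inter> (shift R -` K n \<inter> space S))"
    by (auto simp: space_S)
  show ?case unfolding eq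
    using root_sets measurable_sets[OF meas_shift Suc.IH] by blast
qed

lemma K_mono: "K n \<subseteq> K (Suc n)"
proof (induction n)
  case 0 then show ?case by simp
next
  case (Suc n) then show ?case by (auto simp: shift_A3)
qed

lemma K_mono': "m \<le> n \<Longrightarrow> K m \<subseteq> K n"
  by (rule lift_Suc_mono_le[of K]) (rule K_mono)

lemma K_sub: "K n \<subseteq> Lang"
proof (induction n)
  case 0 then show ?case by simp
next
  case (Suc n)
  show ?case
  proof
    fix t assume "t \<in> K (Suc n)"
    then show "t \<in> Lang" using Lang_rec[of t] Suc.IH by auto
  qed
qed

definition Bad :: "(dir list \<Rightarrow> nat) set" where "Bad = Lang - (\<Union>n. K n)"

lemma bad_step: assumes "t \<in> Bad" shows "t [] = 2 \<and> (\<exists>D. shift D t \<in> Bad)"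
proof -
  have tL: "t \<in> Lang" and nK: "\<And>n. t \<notin> K n" using assms by (auto simp: Bad_def)
  have A: "\<forall>x. t x \<in> A3" and c: "t [] = 0 \<or> (t [] = 2 \<and> shift L t \<in> Lang \<and> shift R t \<in> Lang)"
    using tL Lang_rec by blast+
  have "t [] \<noteq> 0" using nK[of "Suc 0"] A by auto
  with c have t2: "t [] = 2" and sL: "shift L t \<in> Lang" and sR: "shift R t \<in> Lang" by auto
  have "\<exists>D. shift D t \<in> Bad"
  proof (rule ccontr)
    assume "\<not> ?thesis"
    then have "\<exists>a. shift L t \<in> K a" "\<exists>b. shift R t \<in> K b" using sL sR by (auto simp: Bad_def)
    then obtain a b where a: "shift L t \<in> K a" and b: "shift R t \<in> K b" by blast
    have "shift L t \<in> K (max a b)" "shift R t \<in> K (max a b)"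
      using a b K_mono'[of a "max a b"] K_mono'[of b "max a b"] by auto
    then have "t \<in> K (Suc (max a b))" using A t2 by simp
    then show False using nK by blast
  qed
  with t2 show ?thesis by blast
qed

definition nxt :: "(dir list \<Rightarrow> nat) \<Rightarrow> dir" where "nxt t = (SOME D. shift D t \<in> Bad)"

fun seqT :: "(dir list \<Rightarrow> nat) \<Rightarrow> nat \<Rightarrow> dir list \<Rightarrow> nat" where
  "seqT t 0 = t"
| "seqT t (Suc k) = shift (nxt (seqT t k)) (seqT t k)"

lemma nxt_Bad: "t \<in> Bad \<Longrightarrow> shift (nxt t) t \<in> Bad"
  unfolding nxt_def using bad_step by (metis someI_ex)

lemma seqT_shift: "seqT t (Suc k) = seqT (shift (nxt t) t) k"
  by (induction k) auto

lemma run_zero: "t \<in> Bad \<Longrightarrow> drun delta 0 t (branch_vertex (\<lambda>k. nxt (seqT t k)) n) = 0"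
proof (induction n arbitrary: t)
  case 0 then show ?case by (simp add: branch_vertex_def)
next
  case (Suc n)
  have t2: "t [] = 2" using bad_step[OF Suc.prems] by blast
  have b: "shift (nxt t) t \<in> Bad" using nxt_Bad[OF Suc.prems] .
  have "drun delta 0 t (branch_vertex (\<lambda>k. nxt (seqT t k)) (Suc n)) =
     drun delta 0 (shift (nxt t) t) (branch_vertex (\<lambda>i. nxt (seqT t (Suc i))) n)"
    unfolding run_Suc using t2 by (simp add: delta_def dsel_def split: dir.splits)
  also have "(\<lambda>i. nxt (seqT t (Suc i))) = (\<lambda>i. nxt (seqT (shift (nxt t) t) i))"
    by (simp only: seqT_shift)
  finally show ?case using Suc.IH[OF b] by simp
qed

lemma Bad_empty: "Bad = {}"
proof (rule ccontr)
  assume "Bad \<noteq> {}"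
  then obtain t where t: "t \<in> Bad" by blast
  then have "t \<in> Lang" by (simp add: Bad_def)
  then have "parity_ok pri (\<lambda>n. drun delta 0 t (branch_vertex (\<lambda>k. nxt (seqT t k)) n))"
    by (simp add: det_lang_def)
  then show False using run_zero[OF t] by (simp add: parity_const pri_def)
qed

lemma Lang_eq: "Lang = (\<Union>n. K n)"
  using Bad_empty K_sub unfolding Bad_def by blast

lemma Lang_sets: "Lang \<in> sets S"
  unfolding Lang_eq using K_sets by blast

lemma prob_pair: "prob_space M1 \<Longrightarrow> prob_space M2 \<Longrightarrow> prob_space (M1 \<Otimes>\<^sub>M M2)"
proof -
  assume a: "prob_space M1" and b: "prob_space M2"
  interpret a: prob_space M1 by (rule a)
  interpret b: prob_space M2 by (rule b)
  interpret pair_prob_space M1 M2 by unfold_locales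
  show ?thesis by (rule P.prob_space_axioms)
qed

lemma measure_Times: "prob_space N \<Longrightarrow> A \<in> sets M \<Longrightarrow> B \<in> sets N \<Longrightarrow> measure (M \<Otimes>\<^sub>M N) (A \<times> B) = measure M A * measure N B"
  by (simp add: measure_def sigma_finite_measure.emeasure_pair_measure_Times[OF prob_space_imp_sigma_finite] enn2real_mult)

lemma shift_tcons: "shift L (tcons a l r) = l" "shift R (tcons a l r) = r"
  by (auto simp: shift_def)

lemma Lang_space: "Lang \<subseteq> space S"
  by (auto simp: det_lang_def space_S)

lemma Lang_eqn: "measure S Lang = 1/3 + (measure S Lang)^2 / 3"
proof -
  let ?M = "U \<Otimes>\<^sub>M (S \<Otimes>\<^sub>M S)"
  let ?f = "\<lambda>(a,l,r). tcons a l r"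
  let ?P0 = "{0} \<times> space (S \<Otimes>\<^sub>M S)" and ?P2 = "{2::nat} \<times> (Lang \<times> Lang)"
  have Mp: "prob_space ?M" by (intro prob_pair U_prob S_prob)
  interpret Mp: prob_space ?M by (rule Mp)
  have e0: "measure S Lang = measure (distr ?M S ?f) Lang" by (simp only: tcons_distr)
  have e1: "measure (distr ?M S ?f) Lang = measure ?M (?f -` Lang \<inter> space ?M)"
    by (rule measure_distr[OF meas_tcons Lang_sets])
  have e2: "?f -` Lang \<inter> space ?M = ?P0 \<union> ?P2"
  proof (rule set_eqI)
    fix x :: "nat \<times> (dir list \<Rightarrow> nat) \<times> (dir list \<Rightarrow> nat)"
    obtain a l r where x: "x = (a,l,r)" by (cases x) auto
    show "x \<in> ?f -` Lang \<inter> space ?M \<longleftrightarrow> x \<in> ?P0 \<union> ?P2"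
    proof
      assume "x \<in> ?f -` Lang \<inter> space ?M"
      then have "tcons a l r \<in> Lang" and sp: "a \<in> A3" "l \<in> space S" "r \<in> space S"
        by (auto simp: x space_pair_measure space_uniform_count_measure)
      then show "x \<in> ?P0 \<union> ?P2"
        unfolding Lang_rec[of "tcons a l r"] shift_tcons by (auto simp: x space_pair_measure)
    next
      assume a: "x \<in> ?P0 \<union> ?P2"
      then have sp: "a \<in> A3" "l \<in> space S" "r \<in> space S"
        using Lang_space by (auto simp: x space_pair_measure A3_iff)
      then have tA: "\<forall>v. tcons a l r v \<in> A3" by (intro allI tcons_in) (auto simp: space_S)
      have "tcons a l r \<in> Lang"
        unfolding Lang_rec[of "tcons a l r"] shift_tcons using tA a by (auto simp: x)
      then show "x \<in> ?f -` Lang \<inter> space ?M"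
        using sp by (auto simp: x space_pair_measure space_uniform_count_measure)
    qed
  qed
  have e3: "measure ?M (?P0 \<union> ?P2) = measure ?M ?P0 + measure ?M ?P2"
    by (rule Mp.finite_measure_Union) (auto simp: sets_uniform_count_measure Lang_sets A3_iff)
  have e4: "measure ?M ?P0 = measure U {0} * measure (S \<Otimes>\<^sub>M S) (space (S \<Otimes>\<^sub>M S))"
    by (rule measure_Times) (auto simp: sets_uniform_count_measure A3_iff intro: prob_pair S_prob)
  have e5: "measure ?M ?P2 = measure U {2} * measure (S \<Otimes>\<^sub>M S) (Lang \<times> Lang)"
    by (rule measure_Times) (auto simp: sets_uniform_count_measure Lang_sets A3_iff intro: prob_pair S_prob)
  have e6: "measure (S \<Otimes>\<^sub>M S) (Lang \<times> Lang) = measure S Lang * measure S Lang"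
    by (rule measure_Times) (auto simp: Lang_sets intro: S_prob)
  have e7: "measure (S \<Otimes>\<^sub>M S) (space (S \<Otimes>\<^sub>M S)) = 1"
    using prob_space.prob_space[OF prob_pair[OF S_prob S_prob]] .
  have e8: "measure U {0} = 1/3" by (simp add: measure_uniform_count_measure A3_fin A3_card A3_iff)
  have e9: "measure U {2} = 1/3" by (simp add: measure_uniform_count_measure A3_fin A3_card A3_iff)
  have "measure S Lang = measure U {0} * measure (S \<Otimes>\<^sub>M S) (space (S \<Otimes>\<^sub>M S)) + measure U {2} * measure (S \<Otimes>\<^sub>M S) (Lang \<times> Lang)"
    by (simp only: e0 e1 e2 e3 e4 e5)
  then show ?thesis unfolding e6 e7 e8 e9 by (simp add: power2_eq_square)
qed

lemma sqrt5_irr: "sqrt 5 \<notin> \<rat>"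
proof
  have p: "prime (5::nat)" by code_simp
  assume "sqrt 5 \<in> \<rat>"
  then obtain m n :: nat where n: "n \<noteq> 0" and sq: "\<bar>sqrt 5\<bar> = m / n" and cop: "coprime m n"
    by (rule Rats_abs_nat_div_natE)
  have "real m = \<bar>sqrt 5\<bar> * n" using n sq by simp
  then have "real m ^ 2 = (sqrt 5) ^ 2 * real n ^ 2" by (simp add: power_mult_distrib)
  then have "real (m ^ 2) = real (5 * n ^ 2)" by simp
  then have eq: "m ^ 2 = 5 * n ^ 2" by (simp only: of_nat_eq_iff)
  have "5 dvd m"
  proof -
    from eq have "5 dvd m ^ 2" by simp
    with p show ?thesis by (rule prime_dvd_power)
  qed
  then obtain k where k: "m = 5 * k" ..
  with eq have "5 * n ^ 2 = 25 * k ^ 2" by (simp add: power_mult_distrib)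
  then have "n ^ 2 = 5 * k ^ 2" by simp
  then have "5 dvd n ^ 2" by simp
  with p have "5 dvd n" by (rule prime_dvd_power)
  with \<open>5 dvd m\<close> have "5 dvd gcd m n" by simp
  with cop show False by simp
qed

lemma Lang_irr: "measure S Lang \<notin> \<rat>"
proof
  let ?x = "measure S Lang"
  assume r: "?x \<in> \<rat>"
  have e: "?x = 1/3 + ?x^2/3" by (rule Lang_eqn)
  have le: "?x \<le> 1" using prob_space.prob_le_1[OF S_prob] .
  have "(3 - 2 * ?x) ^ 2 = 5" using e by (simp add: power2_eq_square algebra_simps)
  then have s1: "sqrt 5 = sqrt ((3 - 2 * ?x) ^ 2)" by simp
  have pos: "0 \<le> 3 - 2 * ?x" using le by simp
  have "sqrt 5 = 3 - 2 * ?x" unfolding s1 using pos by (simp only: real_sqrt_abs abs_of_nonneg)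
  also have "\<dots> \<in> \<rat>" using r by (intro Rats_diff Rats_mult) auto
  finally show False using sqrt5_irr by blast
qed

theorem proposition1:
  shows "\<exists>(A :: nat set) (Q :: nat set) q0 delta (\<pi> :: nat \<Rightarrow> nat).
           finite A \<and> A \<noteq> {} \<and> det_automaton A Q q0 delta \<and>
           det_lang A q0 delta \<pi> \<in> sets (coin_measure A) \<and>
           measure (coin_measure A) (det_lang A q0 delta \<pi>) \<notin> \<rat>"
proof -
  have ne: "A3 \<noteq> {}" by (auto simp: A3_def)
  have da: "det_automaton A3 {0,1,2} 0 delta"
    unfolding det_automaton_def by (auto simp: delta_def)
  show ?thesis using A3_fin ne da Lang_sets Lang_irr by blast
qed

end
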